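(* Fix $\epsilon>0$, $\delta>0$ and an integer $L\geq 2$ such that $2\epsilon<\delta\leq 1/L$. Then the Opportunistic Bisection strategy (which uses $2L+\lceil\log(1/(\epsilon L))\rceil$ queries) is $(\epsilon,\delta,L)$-private.
   Context: Model: unknown true value $v^*\in[0,1)$; a learner submits queries $q_k\in[0,1)$ and receives $r_k=\mathbb{I}(v^*\geq q_k)$. A learner strategy of length $N$ uses a random seed $Y$ uniform on $\{1,\dots,\mathcal{Y}\}$, with $q_1=\phi_1(Y)$, $q_k=\phi_k(r_1,\dots,r_{k-1},Y)$, and estimate $\hat x=\phi^E(r_1,\dots,r_N,Y)$. $\mathcal{Q}(x)$ is the set of query sequences with positive probability (over $Y$) when $v^*=x$; information set $\mathcal{I}(\overline q)=\{x\in[0,1):\overline q\in\mathcal{Q}(x)\}$. $C_\delta(\mathcal{E})$ is the least number of closed intervals of length at most $\delta$ covering $\mathcal{E}$. A strategy is $(\epsilon,\delta,L)$-private if $\mathbb{P}(|\hat x(x,Y)-x|\leq\epsilon/2)=1$ for all $x\in[0,1)$ and $C_\delta(\mathcal{I}(\overline q))\geq L$ for all $x$ and all $\overline q\in\mathcal{Q}(x)$. Bisection searches: for an interval $\mathcal{J}$ and $M\in\mathbb{N}$, set $\mathcal{J}_1=\mathcal{J}$, $q_i=$ midpoint of $\mathcal{J}_i$, and $\mathcal{J}_{i+1}=[\inf\mathcal{J}_i,q_i)$ or $[q_i,\sup\mathcal{J}_i)$ according as a bit $b_i$ is 0 or 1, for $i=1,\dots,M$. It is a truthful bisection search if $b_i=r_i$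 (the response to $q_i$), and a fictitious bisection search if $b_i=Z_i$ where $Z_1,Z_2,\dots$ are i.i.d. Bernoulli(1/2) generated from $Y$. Opportunistic Bisection strategy: Phase 1: $q_i=(i-1)/L$ for $i=1,\dots,L$, and $q_{L+i}=q_i+\epsilon$ for $i=1,\dots,L$; the intervals $[q_i,q_{i+L})$ are called guesses. Let the sub-intervals be $\mathcal{J}^{(i)}=[(i-1)/L+\epsilon,\ i/L)$, $i=1,\dots,L$. Phase 2 (queries $q_{2L+1},\dots,q_{2L+M}$ with $M=\lceil\log(1/(\epsilon L))\rceil$, log base 2): if no guess contains $v^*$, perform a truthful bisection search of the sub-interval $\mathcal{J}^*$ containing $v^*$; if some guess contains $v^*$, choose a sub-interval uniformly at random (using $Y$) and perform a fictitious bisection search of it. The estimate is the midpoint of the guess containing $v^*$ in the latter case, and otherwise the midpoint of the final interval of the truthful search (the interval adjacent to $q_N$ known to contain $v^*$). *)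

theory Defs
  imports "HOL-Probability.Probability"
begin

text \<open>A learner strategy of length N with seed Y uniform on {1..nseeds}.
  query k rs y is q_k = phi_k(r_1,...,r_{k-1},Y) (k >= 1, rs has length k-1),
  est rs y is the estimate phi^E(r_1,...,r_N,Y).\<close>

record strategy =
  nseeds :: nat
  len :: nat
  query :: "nat \<Rightarrow> bool list \<Rightarrow> nat \<Rightarrow> real"
  est :: "bool list \<Rightarrow> nat \<Rightarrow> real"

fun resps :: "(nat \<Rightarrow> bool list \<Rightarrow> nat \<Rightarrow> real) \<Rightarrow> real \<Rightarrow> nat \<Rightarrow> nat \<Rightarrow> bool list" where
  "resps \<phi> x y 0 = []"
| "resps \<phi> x y (Suc k) = (let rs = resps \<phi> x y k in rs @ [x \<ge> \<phi> (Suc k) rs y])"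

definition qseq :: "strategy \<Rightarrow> real \<Rightarrow> nat \<Rightarrow> real list" where
  "qseq S x y = map (\<lambda>k. query S k (resps (query S) x y (k - 1)) y) [1..<len S + 1]"

definition estimate :: "strategy \<Rightarrow> real \<Rightarrow> nat \<Rightarrow> real" where
  "estimate S x y = est S (resps (query S) x y (len S)) y"

definition seed_pmf :: "strategy \<Rightarrow> nat pmf" where
  "seed_pmf S = pmf_of_set {1..nseeds S}"

definition Qset :: "strategy \<Rightarrow> real \<Rightarrow> real list set" where
  "Qset S x = {qb. measure_pmf.prob (seed_pmf S) {y. qseq S x y = qb} > 0}"

definition info_set :: "strategy \<Rightarrow> real list \<Rightarrow> real set" where
  "info_set S qb = {x. 0 \<le> x \<and> x < 1 \<and> qb \<in> Qset S x}"

definition cover_num :: "real \<Rightarrow> real set \<Rightarrow> nat" where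
  "cover_num \<delta> E = (LEAST n. \<exists>a b :: nat \<Rightarrow> real.
      (\<forall>i<n. b i - a i \<le> \<delta>) \<and> E \<subseteq> (\<Union>i<n. {a i..b i}))"

definition is_private :: "strategy \<Rightarrow> real \<Rightarrow> real \<Rightarrow> nat \<Rightarrow> bool" where
  "is_private S \<epsilon> \<delta> L \<longleftrightarrow>
     (\<forall>x. 0 \<le> x \<and> x < 1 \<longrightarrow>
        measure_pmf.prob (seed_pmf S) {y. \<bar>estimate S x y - x\<bar> \<le> \<epsilon> / 2} = 1) \<and>
     (\<forall>x. 0 \<le> x \<and> x < 1 \<longrightarrow>
        (\<forall>qb \<in> Qset S x. cover_num \<delta> (info_set S qb) \<ge> L))"

text \<open>Intervals [a,b) represented as pairs (a,b). Bit True means upper half [q,b).\<close>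
fun bisect :: "real \<times> real \<Rightarrow> bool list \<Rightarrow> real \<times> real" where
  "bisect J [] = J"
| "bisect (a, b) (c # cs) = bisect (if c then ((a + b) / 2, b) else (a, (a + b) / 2)) cs"

definition midpt :: "real \<times> real \<Rightarrow> real" where
  "midpt J = (fst J + snd J) / 2"

definition ob_M :: "real \<Rightarrow> nat \<Rightarrow> nat" where
  "ob_M \<epsilon> L = nat \<lceil>log 2 (1 / (\<epsilon> * real L))\<rceil>"

text \<open>Seed y in {1..L*2^M} encodes a uniformly random sub-interval index in {1..L}
  and independent fair bits Z_1..Z_M.\<close>
definition ob_subidx :: "nat \<Rightarrow> nat \<Rightarrow> nat" where
  "ob_subidx L y = (y - 1) mod L + 1"

definition ob_Z :: "nat \<Rightarrow> nat \<Rightarrow> nat \<Rightarrow> bool" where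
  "ob_Z L y k = odd (((y - 1) div L) div 2 ^ (k - 1))"

definition ob_sub :: "real \<Rightarrow> nat \<Rightarrow> nat \<Rightarrow> real \<times> real" where
  "ob_sub \<epsilon> L i = (real (i - 1) / real L + \<epsilon>, real i / real L)"

text \<open>Index j with v* in [(j-1)/L, j/L): the number of positive responses to q_1..q_L.\<close>
definition ob_j :: "nat \<Rightarrow> bool list \<Rightarrow> nat" where
  "ob_j L rs = length (filter id (take L rs))"

text \<open>v* lies in guess j iff the response to q_{L+j} = (j-1)/L + eps is negative.\<close>
definition ob_in_guess :: "nat \<Rightarrow> bool list \<Rightarrow> bool" where
  "ob_in_guess L rs \<longleftrightarrow> \<not> rs ! (L + ob_j L rs - 1)"

definition ob_query :: "real \<Rightarrow> nat \<Rightarrow> nat \<Rightarrow> bool list \<Rightarrow> nat \<Rightarrow> real" where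
  "ob_query \<epsilon> L k rs y =
     (if k \<le> L then real (k - 1) / real L
      else if k \<le> 2 * L then real (k - L - 1) / real L + \<epsilon>
      else (let m = k - 2 * L in
        if ob_in_guess L rs
        then midpt (bisect (ob_sub \<epsilon> L (ob_subidx L y)) (map (ob_Z L y) [1..<m]))
        else midpt (bisect (ob_sub \<epsilon> L (ob_j L rs)) (take (m - 1) (drop (2 * L) rs)))))"

definition ob_est :: "real \<Rightarrow> nat \<Rightarrow> bool list \<Rightarrow> nat \<Rightarrow> real" where
  "ob_est \<epsilon> L rs y =
     (if ob_in_guess L rs then real (ob_j L rs - 1) / real L + \<epsilon> / 2
      else midpt (bisect (ob_sub \<epsilon> L (ob_j L rs)) (drop (2 * L) rs)))"

definition OB :: "real \<Rightarrow> nat \<Rightarrow> strategy" where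
  "OB \<epsilon> L = \<lparr> nseeds = L * 2 ^ ob_M \<epsilon> L, len = 2 * L + ob_M \<epsilon> L,
               query = ob_query \<epsilon> L, est = ob_est \<epsilon> L \<rparr>"

end

theory Submission imports Defs begin

lemma resps_length[simp]: "length (resps \<phi> x y k) = k"
  by (induction k) (simp_all add: Let_def)

lemma resps_take: "k' \<le> k \<Longrightarrow> take k' (resps \<phi> x y k) = resps \<phi> x y k'"
proof (induction k)
  case 0 then show ?case by simp
next
  case (Suc k)
  show ?case
  proof (cases "k' = Suc k")
    case True then show ?thesis by (metis resps_length take_all order_refl)
  next
    case False
    then have "k' \<le> k" using Suc.prems by simp
    then show ?thesis using Suc.IH by (simp add: Let_def)
  qed
qed

lemma resps_nth: "i < k \<Longrightarrow> resps \<phi> x y k ! i = (x \<ge> \<phi> (Suc i) (resps \<phi> x y i) y)"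
proof -
  assume "i < k"
  then have "resps \<phi> x y k ! i = take (Suc i) (resps \<phi> x y k) ! i" by simp
  also have "\<dots> = resps \<phi> x y (Suc i) ! i" using \<open>i < k\<close> by (simp add: resps_take)
  also have "\<dots> = (x \<ge> \<phi> (Suc i) (resps \<phi> x y i) y)" by (simp add: Let_def nth_append)
  finally show ?thesis .
qed

lemma bisect_len: "snd (bisect J bs) - fst (bisect J bs) = (snd J - fst J) / 2 ^ length bs"
proof (induction bs arbitrary: J)
  case Nil then show ?case by simp
next
  case (Cons c cs)
  obtain a b where J: "J = (a,b)" by fastforce
  show ?case using Cons.IH[of "if c then ((a + b) / 2, b) else (a, (a + b) / 2)"]
    by (auto simp: J field_simps)
qed

lemma bisect_contains:
  assumes "\<And>m. m < length bs \<Longrightarrow> bs ! m = (x \<ge> midpt (bisect J (take m bs)))"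
    and "fst J \<le> x" "x < snd J"
  shows "fst (bisect J bs) \<le> x \<and> x < snd (bisect J bs)"
  using assms
proof (induction bs arbitrary: J)
  case Nil then show ?case by simp
next
  case (Cons c cs)
  obtain a b where J: "J = (a,b)" by fastforce
  have c: "c = (x \<ge> (a+b)/2)" using Cons.prems(1)[of 0] by (simp add: J midpt_def)
  let ?J = "if c then ((a + b) / 2, b) else (a, (a + b) / 2)"
  have "fst (bisect ?J cs) \<le> x \<and> x < snd (bisect ?J cs)"
  proof (rule Cons.IH)
    fix m assume "m < length cs"
    then show "cs ! m = (x \<ge> midpt (bisect ?J (take m cs)))"
      using Cons.prems(1)[of "Suc m"] by (simp add: J)
  next
    show "fst ?J \<le> x" using c Cons.prems(2) by (auto simp: J)
    show "x < snd ?J" using c Cons.prems(3) by (auto simp: J)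
  qed
  then show ?case by (simp add: J)
qed


definition jx :: "nat \<Rightarrow> real \<Rightarrow> nat" where
  "jx L x = nat \<lfloor>x * real L\<rfloor> + 1"

lemma jx_props:
  assumes "L \<ge> 1" "0 \<le> x" "x < 1"
  shows "1 \<le> jx L x" "jx L x \<le> L" "real (jx L x - 1) / L \<le> x" "x < real (jx L x) / L"
proof -
  have Lp: "real L > 0" using assms by simp
  have f0: "\<lfloor>x * real L\<rfloor> \<ge> 0" using assms by simp
  have fl: "\<lfloor>x * real L\<rfloor> < int L"
    using assms Lp by (simp add: floor_less_iff)
  show "1 \<le> jx L x" by (simp add: jx_def)
  show "jx L x \<le> L" using fl f0 unfolding jx_def by linarith
  have e1: "real (jx L x - 1) = of_int \<lfloor>x * real L\<rfloor>" using f0 by (simp add: jx_def)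
  have e2: "real (jx L x) = of_int \<lfloor>x * real L\<rfloor> + 1" using f0 by (simp add: jx_def)
  show "real (jx L x - 1) / L \<le> x" unfolding e1 using Lp
    by (simp add: divide_le_eq)
  show "x < real (jx L x) / L" unfolding e2 using Lp
    by (simp add: less_divide_eq)
qed

lemma count_lemma:
  assumes "L \<ge> 1" "0 \<le> x" "x < 1"
  shows "length (filter (\<lambda>i. real i / real L \<le> x) [0..<L]) = jx L x"
proof -
  have Lp: "real L > 0" using assms by simp
  have f0: "\<lfloor>x * real L\<rfloor> \<ge> 0" using assms by simp
  have "length (filter (\<lambda>i. real i / real L \<le> x) [0..<L])
      = card {i. i < L \<and> real i / real L \<le> x}"
    by (simp add: length_filter_conv_card cong: conj_cong)
  also have "{i. i < L \<and> real i / real L \<le> x} = {..<jx L x}"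
  proof -
    have "i < L \<and> real i / real L \<le> x \<longleftrightarrow> i < jx L x" for i
    proof -
      have "real i / real L \<le> x \<longleftrightarrow> real i \<le> x * real L" using Lp by (simp add: divide_le_eq)
      also have "\<dots> \<longleftrightarrow> int i \<le> \<lfloor>x * real L\<rfloor>" by (simp add: le_floor_iff)
      also have "\<dots> \<longleftrightarrow> i < jx L x" unfolding jx_def using le_nat_iff[OF f0, of i] by linarith
      finally show ?thesis using jx_props(2)[OF assms] by auto
    qed
    then show ?thesis by auto
  qed
  finally show ?thesis by simp
qed

context
  fixes e :: real and L :: nat
  assumes e: "e > 0" and L1: "L \<ge> 1" and eL: "e * real L < 1"
begin

lemma R_lo: "i < L \<Longrightarrow> i < k \<Longrightarrow> resps (ob_query e L) x y k ! i = (real i / real L \<le> x)"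
  by (simp add: resps_nth ob_query_def)

lemma R_hi: "L \<le> i \<Longrightarrow> i < 2 * L \<Longrightarrow> i < k \<Longrightarrow>
    resps (ob_query e L) x y k ! i = (real (i - L) / real L + e \<le> x)"
  by (simp add: resps_nth ob_query_def)

lemma R_j: assumes "L \<le> k" "0 \<le> x" "x < 1"
  shows "ob_j L (resps (ob_query e L) x y k) = jx L x"
proof -
  have "take L (resps (ob_query e L) x y k) = map (\<lambda>i. real i / real L \<le> x) [0..<L]"
    by (rule nth_equalityI) (use assms in \<open>auto simp: R_lo\<close>)
  then show ?thesis unfolding ob_j_def using count_lemma[OF L1 assms(2,3)] by (simp add: filter_map comp_def id_def)
qed

lemma R_guess: assumes "2 * L \<le> k" "0 \<le> x" "x < 1"
  shows "ob_in_guess L (resps (ob_query e L) x y k) \<longleftrightarrow> x < real (jx L x - 1) / real L + e"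
proof -
  have j: "ob_j L (resps (ob_query e L) x y k) = jx L x" using assms by (intro R_j) auto
  have "1 \<le> jx L x" "jx L x \<le> L" using jx_props[OF L1 assms(2,3)] by auto
  then show ?thesis unfolding ob_in_guess_def j using assms
    by (subst R_hi) (auto simp: not_le)
qed


definition Fq :: "real \<Rightarrow> nat \<Rightarrow> nat \<Rightarrow> nat \<Rightarrow> bool list \<Rightarrow> real list" where
  "Fq e' L' M i bs = map (\<lambda>k. if k \<le> L' then real (k - 1) / real L'
      else if k \<le> 2 * L' then real (k - L' - 1) / real L' + e'
      else midpt (bisect (ob_sub e' L' i) (take (k - 2 * L' - 1) bs))) [1..<2 * L' + M + 1]"

lemma qseq_OB: "qseq (OB e L) x y =
   map (\<lambda>k. ob_query e L k (resps (ob_query e L) x y (k - 1)) y) [1..<2 * L + ob_M e L + 1]"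
  by (simp add: qseq_def OB_def)

lemma qseq_guess:
  assumes "0 \<le> x" "x < 1" "x < real (jx L x - 1) / real L + e"
  shows "qseq (OB e L) x y = Fq e L (ob_M e L) (ob_subidx L y) (map (ob_Z L y) [1..<ob_M e L + 1])"
  unfolding qseq_OB Fq_def
proof (rule map_cong[OF refl])
  fix k assume k: "k \<in> set [1..<2 * L + ob_M e L + 1]"
  show "ob_query e L k (resps (ob_query e L) x y (k - 1)) y =
    (if k \<le> L then real (k - 1) / real L
      else if k \<le> 2 * L then real (k - L - 1) / real L + e
      else midpt (bisect (ob_sub e L (ob_subidx L y)) (take (k - 2 * L - 1) (map (ob_Z L y) [1..<ob_M e L + 1]))))"
  proof (cases "k \<le> 2 * L")
    case True then show ?thesis by (simp add: ob_query_def)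
  next
    case False
    then have g: "ob_in_guess L (resps (ob_query e L) x y (k - 1))"
      using assms by (subst R_guess) auto
    have t: "take (k - 2 * L - 1) (map (ob_Z L y) [1..<ob_M e L + 1]) = map (ob_Z L y) [1..<k - 2 * L]"
    proof -
      have "1 + (k - 2 * L - 1) \<le> ob_M e L + 1" using k by auto
      then have "take (k - 2 * L - 1) [1..<ob_M e L + 1] = [1..<1 + (k - 2 * L - 1)]"
        by (rule take_upt)
      moreover have "1 + (k - 2 * L - 1) = k - 2 * L" using False by auto
      ultimately show ?thesis by (simp add: take_map del: upt_Suc)
    qed
    show ?thesis using False g t by (simp add: ob_query_def Let_def)
  qed
qed

lemma qseq_truth:
  assumes "0 \<le> x" "x < 1" "\<not> x < real (jx L x - 1) / real L + e"
  shows "qseq (OB e L) x y = Fq e L (ob_M e L) (jx L x)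
     (drop (2 * L) (resps (ob_query e L) x y (2 * L + ob_M e L)))"
  unfolding qseq_OB Fq_def
proof (rule map_cong[OF refl])
  fix k assume k: "k \<in> set [1..<2 * L + ob_M e L + 1]"
  show "ob_query e L k (resps (ob_query e L) x y (k - 1)) y =
    (if k \<le> L then real (k - 1) / real L
      else if k \<le> 2 * L then real (k - L - 1) / real L + e
      else midpt (bisect (ob_sub e L (jx L x)) (take (k - 2 * L - 1) (drop (2 * L) (resps (ob_query e L) x y (2 * L + ob_M e L))))))"
  proof (cases "k \<le> 2 * L")
    case True then show ?thesis by (simp add: ob_query_def)
  next
    case False
    then have g: "\<not> ob_in_guess L (resps (ob_query e L) x y (k - 1))"
      using assms by (subst R_guess) auto
    have j: "ob_j L (resps (ob_query e L) x y (k - 1)) = jx L x"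
      using assms False by (intro R_j) auto
    have "resps (ob_query e L) x y (k - 1) = take (k - 1) (resps (ob_query e L) x y (2 * L + ob_M e L))"
      using k by (intro resps_take[symmetric]) auto
    then have t: "take (k - 2 * L - 1) (drop (2 * L) (resps (ob_query e L) x y (k - 1))) =
       take (k - 2 * L - 1) (drop (2 * L) (resps (ob_query e L) x y (2 * L + ob_M e L)))"
      using False by (simp add: drop_take)
    show ?thesis using False g t j by (simp add: ob_query_def Let_def)
  qed
qed

end


fun bnum :: "bool list \<Rightarrow> nat" where
  "bnum [] = 0"
| "bnum (b # bs) = of_bool b + 2 * bnum bs"

lemma bnum_lt: "bnum bs < 2 ^ length bs"
  by (induction bs) auto

lemma bnum_bit: "k < length bs \<Longrightarrow> odd (bnum bs div 2 ^ k) = bs ! k"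
proof (induction bs arbitrary: k)
  case Nil then show ?case by simp
next
  case (Cons b bs)
  show ?case
  proof (cases k)
    case 0 then show ?thesis by simp
  next
    case (Suc k')
    have "bnum (b # bs) div 2 ^ k = (of_bool b + 2 * bnum bs) div 2 div 2 ^ k'"
      by (simp add: Suc div_mult2_eq)
    also have "(of_bool b + 2 * bnum bs) div 2 = bnum bs" by simp
    finally show ?thesis using Cons Suc by simp
  qed
qed

lemma seed_exists:
  assumes "1 \<le> i" "i \<le> L" "length bs = M"
  shows "\<exists>y \<in> {1..L * 2 ^ M}. ob_subidx L y = i \<and> map (ob_Z L y) [1..<M + 1] = bs"
proof (intro bexI conjI)
  let ?y = "i + L * bnum bs"
  have t: "bnum bs < 2 ^ M" using bnum_lt assms by metis
  have y1: "?y - 1 = (i - 1) + L * bnum bs" using assms by simp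
  have "?y \<le> L + L * (2 ^ M - 1)" using t assms
    by (intro add_mono) auto
  also have "\<dots> = L * 2 ^ M" by (simp add: algebra_simps)
  finally show "?y \<in> {1..L * 2 ^ M}" using assms by simp
  obtain i0 where i0: "i = Suc i0" using assms by (cases i) auto
  have m0: "((i - 1) + L * bnum bs) mod L = i - 1" using assms unfolding i0 by simp
  have m: "(?y - 1) mod L = i - 1" using y1 m0 by metis
  then show "ob_subidx L ?y = i" unfolding ob_subidx_def using assms by simp
  have d0: "((i - 1) + L * bnum bs) div L = bnum bs" using assms unfolding i0 by simp
  have d: "(?y - 1) div L = bnum bs" using y1 d0 by metis
  show "map (ob_Z L ?y) [1..<M + 1] = bs"
  proof (rule nth_equalityI)
    show "length (map (ob_Z L ?y) [1..<M + 1]) = length bs" using assms by simp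
    fix k assume "k < length (map (ob_Z L ?y) [1..<M + 1])"
    then have k: "k < M" by (simp del: upt_Suc)
    have "map (ob_Z L ?y) [1..<M + 1] ! k = ob_Z L ?y (Suc k)" using k
      by (simp del: upt_Suc)
    also have "\<dots> = bs ! k" unfolding ob_Z_def d using k assms bnum_bit by simp
    finally show "map (ob_Z L ?y) [1..<M + 1] ! k = bs ! k" .
  qed
qed

lemma cover_lower:
  fixes p :: "nat \<Rightarrow> real"
  assumes d: "\<delta> > 0" and E: "E \<subseteq> {0..<1}"
    and pE: "\<And>k. k \<in> {1..L} \<Longrightarrow> p k \<in> E"
    and sep: "\<And>k k'. k \<in> {1..L} \<Longrightarrow> k' \<in> {1..L} \<Longrightarrow> k \<noteq> k' \<Longrightarrow> \<bar>p k - p k'\<bar> > \<delta>"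
  shows "cover_num \<delta> E \<ge> L"
proof -
  let ?P = "\<lambda>n. \<exists>a b :: nat \<Rightarrow> real. (\<forall>i<n. b i - a i \<le> \<delta>) \<and> E \<subseteq> (\<Union>i<n. {a i..b i})"
  have ex: "?P (nat \<lceil>1 / \<delta>\<rceil>)"
  proof (intro exI conjI)
    show "\<forall>i<nat \<lceil>1 / \<delta>\<rceil>. (real i + 1) * \<delta> - real i * \<delta> \<le> \<delta>" by (simp add: algebra_simps)
    show "E \<subseteq> (\<Union>i<nat \<lceil>1 / \<delta>\<rceil>. {real i * \<delta>..(real i + 1) * \<delta>})"
    proof
      fix x assume "x \<in> E"
      then have x: "0 \<le> x" "x < 1" using E by auto
      let ?i = "nat \<lfloor>x / \<delta>\<rfloor>"
      have f0: "\<lfloor>x / \<delta>\<rfloor> \<ge> 0" using x d by simp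
      have "x / \<delta> < 1 / \<delta>" using x d by (simp add: divide_strict_right_mono)
      then have "\<lfloor>x / \<delta>\<rfloor> < \<lceil>1 / \<delta>\<rceil>" by linarith
      then have i: "?i < nat \<lceil>1 / \<delta>\<rceil>" using f0 by linarith
      have ri: "real ?i = of_int \<lfloor>x / \<delta>\<rfloor>" using f0 by simp
      have "real ?i \<le> x / \<delta>" "x / \<delta> \<le> real ?i + 1" unfolding ri by linarith+
      then have "real ?i * \<delta> \<le> x" "x \<le> (real ?i + 1) * \<delta>" using d
        by (simp_all add: le_divide_eq divide_le_eq)
      then show "x \<in> (\<Union>i<nat \<lceil>1 / \<delta>\<rceil>. {real i * \<delta>..(real i + 1) * \<delta>})" using i by auto
    qed
  qed
  have "L \<le> n" if "?P n" for n
  proof -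
    from that obtain a b where ab: "\<forall>i<n. b i - a i \<le> \<delta>" "E \<subseteq> (\<Union>i<n. {a i..b i})" by blast
    have "\<forall>k\<in>{1..L}. \<exists>i<n. p k \<in> {a i..b i}" using pE ab(2) by blast
    then obtain f where f: "\<And>k. k \<in> {1..L} \<Longrightarrow> f k < n \<and> p k \<in> {a (f k)..b (f k)}" by metis
    have "inj_on f {1..L}"
    proof (rule inj_onI, rule ccontr)
      fix k k' assume kk: "k \<in> {1..L}" "k' \<in> {1..L}" "f k = f k'" "k \<noteq> k'"
      have "\<bar>p k - p k'\<bar> \<le> \<delta>" using f[OF kk(1)] f[OF kk(2)] kk(3) ab(1) by fastforce
      then show False using sep[OF kk(1,2,4)] by simp
    qed
    moreover have "f ` {1..L} \<subseteq> {..<n}" using f by auto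
    ultimately have "card {1..L} \<le> card {..<n}" by (intro card_inj_on_le) auto
    then show ?thesis by simp
  qed
  then show ?thesis unfolding cover_num_def using LeastI_ex[of ?P] ex by blast
qed


theorem proposition1:
  fixes \<epsilon> \<delta> :: real and L :: nat
  assumes "\<epsilon> > 0" and "\<delta> > 0" and "L \<ge> 2"
    and "2 * \<epsilon> < \<delta>" and "\<delta> \<le> 1 / real L"
  shows "is_private (OB \<epsilon> L) \<epsilon> \<delta> L"
proof -
  note e = assms(1)
  define M where "M = ob_M \<epsilon> L"
  define N where "N = L * 2 ^ M"
  have L1: "L \<ge> 1" using assms by simp
  have Lp: "real L > 0" using assms by simp
  have dL: "\<delta> * real L \<le> 1" using assms(5) Lp by (simp add: le_divide_eq)
  have eL: "\<epsilon> * real L < 1"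
  proof -
    have "\<epsilon> * real L < \<delta> * real L" using assms Lp by (intro mult_strict_right_mono) auto
    then show ?thesis using dL by simp
  qed
  have M2: "1 / real L \<le> \<epsilon> * 2 ^ M"
  proof -
    have pos: "1 / (\<epsilon> * real L) > 0" using e Lp by simp
    have "log 2 (1 / (\<epsilon> * real L)) \<le> real M"
      unfolding M_def ob_M_def by linarith
    then have "2 powr log 2 (1 / (\<epsilon> * real L)) \<le> 2 powr real M" by simp
    then have "1 / (\<epsilon> * real L) \<le> 2 ^ M" using pos by (simp add: powr_realpow)
    then show ?thesis using e Lp by (simp add: divide_le_eq field_simps)
  qed
  have N1: "N \<ge> 1" unfolding N_def using L1 by simp
  have seeds: "seed_pmf (OB \<epsilon> L) = pmf_of_set {1..N}"
    by (simp add: seed_pmf_def OB_def N_def M_def)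
  have ne: "{1..N} \<noteq> {}" using N1 by simp
  have prob: "measure_pmf.prob (seed_pmf (OB \<epsilon> L)) A = real (card ({1..N} \<inter> A)) / real (card {1..N})" for A
    unfolding seeds using ne by (simp add: measure_pmf_of_set)
  have Qchar: "qb \<in> Qset (OB \<epsilon> L) x \<longleftrightarrow> (\<exists>y\<in>{1..N}. qseq (OB \<epsilon> L) x y = qb)" for qb x
  proof -
    have "real (card ({1..N} \<inter> {y. qseq (OB \<epsilon> L) x y = qb})) / real (card {1..N}) > 0 \<longleftrightarrow>
          {1..N} \<inter> {y. qseq (OB \<epsilon> L) x y = qb} \<noteq> {}"
    proof -
      have "card {1..N} > 0" using N1 by simp
      then have "real (card ({1..N} \<inter> {y. qseq (OB \<epsilon> L) x y = qb})) / real (card {1..N}) > 0 \<longleftrightarrow>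
          card ({1..N} \<inter> {y. qseq (OB \<epsilon> L) x y = qb}) > 0"
        by (simp add: zero_less_divide_iff)
      also have "\<dots> \<longleftrightarrow> {1..N} \<inter> {y. qseq (OB \<epsilon> L) x y = qb} \<noteq> {}"
        by (rule card_gt_0_iff[THEN trans]) auto
      finally show ?thesis .
    qed
    moreover have "qb \<in> Qset (OB \<epsilon> L) x \<longleftrightarrow> real (card ({1..N} \<inter> {y. qseq (OB \<epsilon> L) x y = qb})) / real (card {1..N}) > 0"
      unfolding Qset_def prob mem_Collect_eq by (rule refl)
    ultimately show ?thesis by blast
  qed
  have acc: "\<bar>estimate (OB \<epsilon> L) x y - x\<bar> \<le> \<epsilon> / 2" if x: "0 \<le> x" "x < 1" for x y
  proof -
    let ?R = "resps (ob_query \<epsilon> L) x y"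
    have est: "estimate (OB \<epsilon> L) x y = ob_est \<epsilon> L (?R (2 * L + M)) y"
      by (simp add: estimate_def OB_def M_def)
    have j: "ob_j L (?R (2 * L + M)) = jx L x" using x by (intro R_j[OF e L1 eL]) auto
    have jp: "1 \<le> jx L x" "jx L x \<le> L" "real (jx L x - 1) / L \<le> x" "x < real (jx L x) / L"
      using jx_props[OF L1 x] by auto
    show ?thesis
    proof (cases "x < real (jx L x - 1) / real L + \<epsilon>")
      case True
      then have g: "ob_in_guess L (?R (2 * L + M))" using x by (subst R_guess[OF e L1 eL]) auto
      have "estimate (OB \<epsilon> L) x y = real (jx L x - 1) / L + \<epsilon> / 2"
        unfolding est ob_est_def using g j by simp
      moreover have "\<bar>c + \<epsilon> / 2 - x\<bar> \<le> \<epsilon> / 2" if "c \<le> x" "x < c + \<epsilon>" for c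
        using that unfolding abs_le_iff by linarith
      ultimately show ?thesis using True jp(3) by presburger
    next
      case False
      then have g: "\<not> ob_in_guess L (?R (2 * L + M))" using x by (subst R_guess[OF e L1 eL]) auto
      define bs where "bs = drop (2 * L) (?R (2 * L + M))"
      define J where "J = ob_sub \<epsilon> L (jx L x)"
      have estv: "estimate (OB \<epsilon> L) x y = midpt (bisect J bs)"
        unfolding est ob_est_def using g j by (simp add: bs_def J_def)
      have lbs: "length bs = M" by (simp add: bs_def)
      have rj: "real (jx L x - 1) = real (jx L x) - 1" using jp by simp
      have J1: "fst J \<le> x" "x < snd J" using False jp by (auto simp: J_def ob_sub_def)
      have Jlen: "snd J - fst J = 1 / real L - \<epsilon>" unfolding J_def ob_sub_def rj
        by (simp add: diff_divide_distrib)
      have "fst (bisect J bs) \<le> x \<and> x < snd (bisect J bs)"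
      proof (rule bisect_contains[OF _ J1])
        fix m assume m: "m < length bs"
        have tk: "take m bs = drop (2 * L) (?R (2 * L + m))"
        proof -
          have "?R (2 * L + m) = take (2 * L + m) (?R (2 * L + M))"
            using m lbs by (intro resps_take[symmetric]) auto
          then show ?thesis by (simp add: bs_def drop_take)
        qed
        have "bs ! m = ?R (2 * L + M) ! (2 * L + m)" using m lbs by (simp add: bs_def)
        also have "\<dots> = (ob_query \<epsilon> L (Suc (2 * L + m)) (?R (2 * L + m)) y \<le> x)"
          using m lbs by (intro resps_nth) auto
        also have "ob_query \<epsilon> L (Suc (2 * L + m)) (?R (2 * L + m)) y = midpt (bisect J (take m bs))"
        proof -
          have g': "\<not> ob_in_guess L (?R (2 * L + m))" using x False by (subst R_guess[OF e L1 eL]) auto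
          have j': "ob_j L (?R (2 * L + m)) = jx L x" using x by (intro R_j[OF e L1 eL]) auto
          have "take m (drop (2 * L) (?R (2 * L + m))) = drop (2 * L) (?R (2 * L + m))" by simp
          then show ?thesis using g' j' tk by (simp add: ob_query_def Let_def J_def)
        qed
        finally show "bs ! m = (midpt (bisect J (take m bs)) \<le> x)" .
      qed
      moreover have "snd (bisect J bs) - fst (bisect J bs) = (1 / real L - \<epsilon>) / 2 ^ M"
        using bisect_len[of J bs] Jlen lbs by simp
      moreover have "(1 / real L - \<epsilon>) / 2 ^ M \<le> \<epsilon>"
      proof -
        have "1 / real L - \<epsilon> \<le> \<epsilon> * 2 ^ M" using M2 e by linarith
        then show ?thesis by (simp add: divide_le_eq)
      qed
      moreover have "\<bar>(a + b) / 2 - x\<bar> \<le> \<epsilon> / 2" if "a \<le> x" "x < b" "b - a \<le> \<epsilon>" for a b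
        using that by (auto simp: abs_le_iff field_simps)
      ultimately show ?thesis unfolding estv midpt_def by (smt (verit))
    qed
  qed
  show ?thesis unfolding is_private_def
  proof (intro conjI allI impI ballI)
    fix x :: real assume x: "0 \<le> x \<and> x < 1"
    have "{1..N} \<inter> {y. \<bar>estimate (OB \<epsilon> L) x y - x\<bar> \<le> \<epsilon> / 2} = {1..N}"
      using acc x by auto
    then show "measure_pmf.prob (seed_pmf (OB \<epsilon> L)) {y. \<bar>estimate (OB \<epsilon> L) x y - x\<bar> \<le> \<epsilon> / 2} = 1"
      unfolding prob using N1 by simp
  next
    fix x :: real and qb assume x: "0 \<le> x \<and> x < 1" and qb: "qb \<in> Qset (OB \<epsilon> L) x"
    obtain y where y: "y \<in> {1..N}" "qseq (OB \<epsilon> L) x y = qb" using qb Qchar by blast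
    obtain i bs where ib: "1 \<le> i" "i \<le> L" "length bs = M" "qb = Fq \<epsilon> L M i bs"
    proof (cases "x < real (jx L x - 1) / real L + \<epsilon>")
      case True
      have "qb = Fq \<epsilon> L M (ob_subidx L y) (map (ob_Z L y) [1..<M + 1])"
        using qseq_guess[OF e L1 eL, of x y] x True y(2) by (simp add: M_def)
      moreover have "1 \<le> ob_subidx L y" "ob_subidx L y \<le> L"
        unfolding ob_subidx_def using L1 by (auto simp: Suc_le_eq)
      ultimately show ?thesis
        by (intro that[of "ob_subidx L y" "map (ob_Z L y) [1..<M + 1]"]) (simp_all del: upt_Suc)
    next
      case False
      have "qb = Fq \<epsilon> L M (jx L x) (drop (2 * L) (resps (ob_query \<epsilon> L) x y (2 * L + M)))"
        using qseq_truth[OF e L1 eL, of x y] x False y(2) by (simp add: M_def)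
      moreover have "1 \<le> jx L x" "jx L x \<le> L" using jx_props[OF L1] x by auto
      ultimately show ?thesis
        by (intro that[of "jx L x" "drop (2 * L) (resps (ob_query \<epsilon> L) x y (2 * L + M))"]) simp_all
    qed
    define p where "p k = real (k - 1) * (1 + \<epsilon>) / real L" for k
    have pk: "0 \<le> p k \<and> p k < 1 \<and> jx L (p k) = k \<and> p k < real (k - 1) / real L + \<epsilon>"
      if k: "k \<in> {1..L}" for k
    proof -
      define r where "r = real (k - 1)"
      have r0: "0 \<le> r" and rL: "r \<le> real L - 1" using k by (auto simp: r_def)
      have re: "r * \<epsilon> < 1"
      proof -
        have "r * \<epsilon> \<le> (real L - 1) * \<epsilon>" using rL e by (intro mult_right_mono) auto
        then show ?thesis using eL e by (simp add: algebra_simps)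
      qed
      have re0: "0 \<le> r * \<epsilon>" using r0 e by simp
      have p0: "0 \<le> p k" unfolding p_def r_def[symmetric] using r0 e by simp
      have pL: "p k * real L = r + r * \<epsilon>" unfolding p_def r_def[symmetric] using Lp
        by (simp add: field_simps)
      have p1: "p k < 1"
      proof -
        have "r + r * \<epsilon> < real L" using rL re by linarith
        show ?thesis
        proof (rule ccontr)
          assume "\<not> p k < 1"
          then have "1 * real L \<le> p k * real L" using Lp by (intro mult_right_mono) auto
          then show False using pL \<open>r + r * \<epsilon> < real L\<close> by linarith
        qed
      qed
      have fl: "\<lfloor>p k * real L\<rfloor> = int (k - 1)"
        unfolding pL by (rule floor_unique) (use re re0 in \<open>auto simp: r_def\<close>)
      have j: "jx L (p k) = k" unfolding jx_def fl using k by (simp del: of_nat_diff)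
      have "p k - r / real L = r * \<epsilon> / real L" unfolding p_def r_def[symmetric]
        by (simp add: add_divide_distrib algebra_simps)
      also have "\<dots> < \<epsilon>"
      proof -
        have "r * \<epsilon> < real L * \<epsilon>" using rL e by (intro mult_strict_right_mono) auto
        then show ?thesis using Lp by (simp add: divide_less_eq mult.commute)
      qed
      finally have "p k < real (k - 1) / real L + \<epsilon>" by (simp add: r_def)
      then show ?thesis using p0 p1 j by simp
    qed
    show "L \<le> cover_num \<delta> (info_set (OB \<epsilon> L) qb)"
    proof (rule cover_lower[OF assms(2), of _ L p])
      show "info_set (OB \<epsilon> L) qb \<subseteq> {0..<1}" by (auto simp: info_set_def)
    next
      fix k assume k: "k \<in> {1..L}"
      obtain y' where y': "y' \<in> {1..L * 2 ^ M}" "ob_subidx L y' = i" "map (ob_Z L y') [1..<M + 1] = bs"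
        using seed_exists[OF ib(1,2,3)] by blast
      have "qseq (OB \<epsilon> L) (p k) y' = Fq \<epsilon> L M (ob_subidx L y') (map (ob_Z L y') [1..<M + 1])"
        using qseq_guess[OF e L1 eL, of "p k" y'] pk[OF k] by (simp add: M_def)
      then have "qseq (OB \<epsilon> L) (p k) y' = qb" using y' ib(4) by simp
      then have "qb \<in> Qset (OB \<epsilon> L) (p k)" using Qchar y'(1) unfolding N_def by blast
      then show "p k \<in> info_set (OB \<epsilon> L) qb" using pk[OF k] by (simp add: info_set_def)
    next
      fix k k' assume k: "k \<in> {1..L}" and k': "k' \<in> {1..L}" and kk: "k \<noteq> k'"
      have "p k - p k' = (real (k - 1) - real (k' - 1)) * ((1 + \<epsilon>) / real L)"
        unfolding p_def by (simp add: algebra_simps)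
      then have "\<bar>p k - p k'\<bar> = \<bar>real (k - 1) - real (k' - 1)\<bar> * ((1 + \<epsilon>) / real L)"
        using e Lp by (simp add: abs_mult)
      moreover have "\<bar>real (k - 1) - real (k' - 1)\<bar> \<ge> 1" using k k' kk by auto
      ultimately have "\<bar>p k - p k'\<bar> \<ge> (1 + \<epsilon>) / real L"
      proof -
        have c: "(1 + \<epsilon>) / real L > 0" using e Lp by simp
        have "1 * ((1 + \<epsilon>) / real L) \<le> \<bar>real (k - 1) - real (k' - 1)\<bar> * ((1 + \<epsilon>) / real L)"
          using c \<open>\<bar>real (k - 1) - real (k' - 1)\<bar> \<ge> 1\<close> by (intro mult_right_mono) auto
        then show ?thesis using \<open>\<bar>p k - p k'\<bar> = _\<close> by simp
      qed
      moreover have "(1 + \<epsilon>) / real L > 1 / real L" using e Lp by (simp add: divide_strict_right_mono)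
      ultimately show "\<bar>p k - p k'\<bar> > \<delta>" using assms(5) by linarith
    qed
  qed
qed

end
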